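(* Let $h$ be a probability density on $\mathbb{R}$ that is $(\alpha,\beta)$-admissible for functions $\alpha,\beta:(0,\infty)\to(0,\infty)$ and satisfies $h(z)>h(z')>0$ for all $0\le z<z'$. Define the one-sided density $g(z)=0$ for $z<0$ and $g(z)=h(z)/\int_{w\ge0}h(w)\,dw$ for $z\ge0$. Let $\epsilon>0$, $k>0$, $l>0$, $\alpha'=\alpha(k\epsilon)$, $\beta'=\beta(l\epsilon)$. Let $u:D^n\times\mathcal{R}\to\mathbb{R}$ be a score function with finite candidate set $\mathcal{R}$, and let $S:D^n\times\mathcal{R}\to(0,\infty)$ be a $\beta'$-smooth upper bound on the local sensitivity of $u$. Consider the mechanism with $Z_r$ ($r\in\mathcal{R}$) i.i.d. with density $g$: $$M_{SPS}(x)=\operatorname{argmax}_{r\in\mathcal{R}}\Big\{u(x,r)+\frac{\max_{r'\in\mathcal{R}}S(x,r')}{\alpha'}\cdot Z_r\Big\}$$ (returning the first maximizer in a fixed ordering of $\mathcal{R}$ if there are several). Then $M_{SPS}$ is $\big((k+\tfrac{|\mathcal{R}|-1}{2}\, l)\,\epsilon\big)$-differentially private.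
   Context: $D^n$ denotes the set of datasets consisting of $n$ elements; Hamming distance $d(x,y)=|\{i:x_i\neq y_i\}|$; $x,y$ neighboring if $d(x,y)=1$. A randomized mechanism $M$ is $\epsilon$-differentially private if for all neighboring $x,y$ and all sets $\mathcal{S}$ of outputs, $\Pr[M(x)\in\mathcal{S}]\le e^{\epsilon}\Pr[M(y)\in\mathcal{S}]$. For a score function $u:D^n\times\mathcal{R}\to\mathbb{R}$, the local sensitivity at $x$ for $r$ is $LS_{u,\mathcal{R}}(x,r)=\max_{y:d(x,y)=1}|u(x,r)-u(y,r)|$. For $\beta>0$, $S:D^n\times\mathcal{R}\to\mathbb{R}$ is a $\beta$-smooth upper bound on the local sensitivity of $u$ if for every $r\in\mathcal{R}$: $S(x,r)\ge LS_{u,\mathcal{R}}(x,r)$ for all $x$, and $S(x,r)\le e^{\beta}S(y,r)$ for all $x,y$ with $d(x,y)=1$. Given functions $\alpha,\beta:(0,\infty)\to(0,\infty)$, a density $h$ on $\mathbb{R}$ is $(\alpha,\beta)$-admissible if for every $\epsilon>0$, every $\Delta\in\mathbb{R}$ with $|\Delta|\le\alpha(\epsilon)$, every $\lambda$ with $|\lambda|\le\beta(\epsilon)$ and every measurable $\mathcal{S}\subseteq\mathbb{R}$, with $Z\sim h$: $\Pr[Z\in\mathcal{S}]\le e^{\epsilon/2}\Pr[Z\in\mathcal{S}+\Delta]$ and $\Pr[Z\in\mathcal{S}]\le e^{\epsilon/2}\Pr[Z\in e^{\lambda}\mathcal{S}]$. *)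

theory Defs
  imports "HOL-Probability.Probability"
begin

text \<open>Datasets in D^n are lists of length n over an element type 'd.\<close>

definition hamming :: "'d list \<Rightarrow> 'd list \<Rightarrow> nat" where
  "hamming x y = card {i. i < length x \<and> x ! i \<noteq> y ! i}"

definition neighboring :: "nat \<Rightarrow> 'd list \<Rightarrow> 'd list \<Rightarrow> bool" where
  "neighboring n x y \<longleftrightarrow> length x = n \<and> length y = n \<and> hamming x y = 1"

definition differentially_private :: "nat \<Rightarrow> ('d list \<Rightarrow> 'o measure) \<Rightarrow> real \<Rightarrow> bool" where
  "differentially_private n M eps \<longleftrightarrow>
     (\<forall>x y. neighboring n x y \<longrightarrow>
        (\<forall>T \<in> sets (M x). measure (M x) T \<le> exp eps * measure (M y) T))"

text \<open>S is a beta-smooth upper bound on the local sensitivity of u (on D^n, candidates R).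
  The condition S(x,r) >= LS(x,r) = max over neighbours y of |u(x,r) - u(y,r)|
  is written out pointwise.\<close>
definition smooth_upper_bound ::
  "nat \<Rightarrow> 'r set \<Rightarrow> ('d list \<Rightarrow> 'r \<Rightarrow> real) \<Rightarrow> ('d list \<Rightarrow> 'r \<Rightarrow> real) \<Rightarrow> real \<Rightarrow> bool" where
  "smooth_upper_bound n R u S \<beta> \<longleftrightarrow>
     (\<forall>r\<in>R. (\<forall>x y. neighboring n x y \<longrightarrow> \<bar>u x r - u y r\<bar> \<le> S x r) \<and>
             (\<forall>x y. neighboring n x y \<longrightarrow> S x r \<le> exp \<beta> * S y r))"

definition admissible :: "(real \<Rightarrow> real) \<Rightarrow> (real \<Rightarrow> real) \<Rightarrow> (real \<Rightarrow> real) \<Rightarrow> bool" where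
  "admissible \<alpha> \<beta> h \<longleftrightarrow>
     (\<forall>\<epsilon>>0. \<forall>\<Delta> lam. \<forall>A \<in> sets borel.
        \<bar>\<Delta>\<bar> \<le> \<alpha> \<epsilon> \<longrightarrow> \<bar>lam\<bar> \<le> \<beta> \<epsilon> \<longrightarrow>
        measure (density lborel h) A \<le> exp (\<epsilon>/2) * measure (density lborel h) ((\<lambda>s. s + \<Delta>) ` A) \<and>
        measure (density lborel h) A \<le> exp (\<epsilon>/2) * measure (density lborel h) ((\<lambda>s. exp lam * s) ` A))"

definition prob_density :: "(real \<Rightarrow> real) \<Rightarrow> bool" where
  "prob_density h \<longleftrightarrow> h \<in> borel_measurable borel \<and> (\<forall>z. 0 \<le> h z) \<and>
     (\<integral>\<^sup>+ z. ennreal (h z) \<partial>lborel) = 1"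

definition one_sided :: "(real \<Rightarrow> real) \<Rightarrow> real \<Rightarrow> real" where
  "one_sided h z = (if z < 0 then 0 else h z / (\<integral>w. indicator {0..} w * h w \<partial>lborel))"

definition argmax_first :: "'r list \<Rightarrow> ('r \<Rightarrow> real) \<Rightarrow> 'r" where
  "argmax_first rs f = hd (filter (\<lambda>r. f r = Max (f ` set rs)) rs)"

definition sps_choice ::
  "'r list \<Rightarrow> ('d list \<Rightarrow> 'r \<Rightarrow> real) \<Rightarrow> ('d list \<Rightarrow> 'r \<Rightarrow> real) \<Rightarrow> real \<Rightarrow> 'd list \<Rightarrow> ('r \<Rightarrow> real) \<Rightarrow> 'r" where
  "sps_choice rs u S a x z =
     argmax_first rs (\<lambda>r. u x r + (Max ((S x) ` set rs) / a) * z r)"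

definition sps_mechanism ::
  "'r list \<Rightarrow> (real \<Rightarrow> real) \<Rightarrow> ('d list \<Rightarrow> 'r \<Rightarrow> real) \<Rightarrow> ('d list \<Rightarrow> 'r \<Rightarrow> real) \<Rightarrow> real \<Rightarrow> 'd list \<Rightarrow> 'r measure" where
  "sps_mechanism rs g u S a x =
     distr (PiM (set rs) (\<lambda>_. density lborel g)) (count_space UNIV) (sps_choice rs u S a x)"

end

theory Submission
  imports Defs
begin


lemma int_le_1d:
  fixes G :: "real measure"
  assumes sG: "sets G = sets borel" and psi: "\<psi> \<in> borel_measurable borel"
   and le: "\<And>B. B \<in> sets borel \<Longrightarrow> emeasure G B \<le> ennreal c * emeasure G (\<psi> -` B)"
   and g: "g \<in> borel_measurable borel"
  shows "(\<integral>\<^sup>+y. g y \<partial>G) \<le> ennreal c * (\<integral>\<^sup>+y. g (\<psi> y) \<partial>G)"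
proof -
  have spG: "space G = UNIV" using sets_eq_imp_space_eq[OF sG] by simp
  have psiG: "\<psi> \<in> G \<rightarrow>\<^sub>M borel" using psi measurable_cong_sets[OF sG refl] by blast
  let ?N = "distr G borel \<psi>"
  have "G \<le> scale_measure (ennreal c) ?N"
    unfolding le_measure_iff
  proof -
    have "emeasure G \<le> emeasure (scale_measure (ennreal c) ?N)"
    proof (rule le_funI)
      fix A show "emeasure G A \<le> emeasure (scale_measure (ennreal c) ?N) A"
      proof (cases "A \<in> sets borel")
        case True
        then show ?thesis using le[OF True] psiG by (simp add: emeasure_distr spG)
      next
        case False
        then show ?thesis using sG by (simp add: emeasure_notin_sets)
      qed
    qed
    then show "if space G = space (scale_measure (ennreal c) ?N) then
      if sets G = sets (scale_measure (ennreal c) ?N) then emeasure G \<le> emeasure (scale_measure (ennreal c) ?N)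
      else sets G \<subseteq> sets (scale_measure (ennreal c) ?N)
     else space G \<subseteq> space (scale_measure (ennreal c) ?N)"
      by (simp add: space_scale_measure spG sG)
  qed
  then have "(\<integral>\<^sup>+y. g y \<partial>G) \<le> (\<integral>\<^sup>+y. g y \<partial>scale_measure (ennreal c) ?N)"
    by (intro nn_integral_mono_measure) (simp add: sG)
  also have "\<dots> = ennreal c * (\<integral>\<^sup>+y. g y \<partial>?N)"
    by (rule nn_integral_scale_measure) (simp add: g)
  also have "(\<integral>\<^sup>+y. g y \<partial>?N) = (\<integral>\<^sup>+y. g (\<psi> y) \<partial>G)"
    using g by (intro nn_integral_distr[OF psiG]) simp
  finally show ?thesis .
qed

lemma prod_le:
  fixes G :: "real measure" and I :: "'i set" and c :: "'i \<Rightarrow> real"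
  assumes sG: "sets G = sets borel" and fin: "finite_measure G"
   and psi: "\<And>i. \<psi> i \<in> borel_measurable borel"
   and c: "\<And>i. 0 \<le> c i"
   and fI: "finite I"
  shows "(\<And>i B. i\<in>I \<Longrightarrow> B \<in> sets borel \<Longrightarrow> emeasure G B \<le> ennreal (c i) * emeasure G (\<psi> i -` B))
     \<Longrightarrow> f \<in> borel_measurable (PiM I (\<lambda>_. G)) \<Longrightarrow>
     (\<integral>\<^sup>+x. f x \<partial>PiM I (\<lambda>_. G)) \<le> ennreal (\<Prod>i\<in>I. c i) * (\<integral>\<^sup>+x. f (\<lambda>j\<in>I. \<psi> j (x j)) \<partial>PiM I (\<lambda>_. G))"
  using fI
proof (induction I arbitrary: f rule: finite_induct)
  case empty
  have eq: "(\<integral>\<^sup>+x. f x \<partial>PiM {} (\<lambda>_. G)) = (\<integral>\<^sup>+x. f (\<lambda>j\<in>{}. \<psi> j (x j)) \<partial>PiM {} (\<lambda>_. G))"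
    by (rule nn_integral_cong) (auto simp: space_PiM_empty restrict_def)
  show ?case unfolding prod.empty ennreal_1 mult_1 eq by (rule order_refl)
next
  case (insert i I)
  let ?PI = "PiM I (\<lambda>_. G)" and ?PJ = "PiM (insert i I) (\<lambda>_. G)"
  interpret P: product_sigma_finite "\<lambda>_. G"
    by (rule product_sigma_finite.intro) (rule finite_measure.axioms(1)[OF fin])
  have psiG: "\<psi> j \<in> G \<rightarrow>\<^sub>M G" for j by (subst measurable_cong_sets[OF sG sG]) (rule psi)
  have ad: "(\<lambda>(f, y). f(i := y)) \<in> (?PI \<Otimes>\<^sub>M G) \<rightarrow>\<^sub>M ?PJ"
    by (rule measurable_add_dim[where I=I and M="\<lambda>_. G" and i=i])
  have ps: "(\<lambda>p. (fst p, \<psi> i (snd p))) \<in> (?PI \<Otimes>\<^sub>M G) \<rightarrow>\<^sub>M (?PI \<Otimes>\<^sub>M G)"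
    by (rule measurable_Pair[OF measurable_fst measurable_compose[OF measurable_snd psiG]])
  note fm = insert.prems(2)
  have u2: "(\<lambda>x. \<lambda>j\<in>insert i I. \<psi> j (x j)) \<in> ?PJ \<rightarrow>\<^sub>M ?PJ"
    by (rule measurable_restrict, rule measurable_compose[OF measurable_component_singleton[where M="\<lambda>_. G"] psiG]) simp
  define F where "F x = ennreal (c i) * (\<integral>\<^sup>+y. f (x(i := \<psi> i y)) \<partial>G)" for x
  have Fm: "F \<in> borel_measurable ?PI"
  proof -
    have "(\<lambda>(f, y). f(i := y)) \<circ> (\<lambda>p. (fst p, \<psi> i (snd p))) \<in> (?PI \<Otimes>\<^sub>M G) \<rightarrow>\<^sub>M ?PJ"
      by (rule measurable_comp[OF ps ad])
    then have "(\<lambda>(x, y). (x::'i \<Rightarrow> real)(i := \<psi> i y)) \<in> (?PI \<Otimes>\<^sub>M G) \<rightarrow>\<^sub>M ?PJ"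
      by (simp add: comp_def case_prod_beta')
    then have "(\<lambda>(x, y). f (x(i := \<psi> i y))) \<in> borel_measurable (?PI \<Otimes>\<^sub>M G)"
      using measurable_comp[OF _ fm] by (simp add: comp_def case_prod_beta')
    then show ?thesis unfolding F_def
      by (intro borel_measurable_times_ennreal measurable_const P.borel_measurable_nn_integral) simp
  qed
  have "(\<integral>\<^sup>+x. f x \<partial>?PJ) = (\<integral>\<^sup>+x. (\<integral>\<^sup>+y. f (x(i := y)) \<partial>G) \<partial>?PI)"
    by (rule P.product_nn_integral_insert) (use insert.hyps fm in auto)
  also have "\<dots> \<le> (\<integral>\<^sup>+x. F x \<partial>?PI)"
  proof (rule nn_integral_mono)
    fix x assume x: "x \<in> space ?PI"
    have "(\<lambda>y. f (x(i := y))) \<in> borel_measurable G"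
      by (rule measurable_compose[OF measurable_component_update[OF x \<open>i \<notin> I\<close>] fm])
    then have "(\<lambda>y. f (x(i := y))) \<in> borel_measurable borel"
      using measurable_cong_sets[OF sG refl] by blast
    then show "(\<integral>\<^sup>+y. f (x(i := y)) \<partial>G) \<le> F x"
      unfolding F_def
      by (intro int_le_1d[OF sG psi]) (use insert.prems(1) in auto)
  qed
  also have "\<dots> \<le> ennreal (\<Prod>j\<in>I. c j) * (\<integral>\<^sup>+x. F (\<lambda>j\<in>I. \<psi> j (x j)) \<partial>?PI)"
    by (rule insert.IH) (use insert.prems(1) Fm in auto)
  also have "(\<integral>\<^sup>+x. F (\<lambda>j\<in>I. \<psi> j (x j)) \<partial>?PI)
      = (\<integral>\<^sup>+x. ennreal (c i) * (\<integral>\<^sup>+y. f (\<lambda>j\<in>insert i I. \<psi> j ((x(i:=y)) j)) \<partial>G) \<partial>?PI)"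
  proof -
    have "\<And>x y. (\<lambda>j\<in>I. \<psi> j (x j))(i := \<psi> i y) = (\<lambda>j\<in>insert i I. \<psi> j ((x(i:=y)) j))"
      using insert.hyps(2) by (auto simp: fun_eq_iff)
    then show ?thesis unfolding F_def by simp
  qed
  also have "\<dots> = ennreal (c i) * (\<integral>\<^sup>+x. (\<integral>\<^sup>+y. f (\<lambda>j\<in>insert i I. \<psi> j ((x(i:=y)) j)) \<partial>G) \<partial>?PI)"
  proof (rule nn_integral_cmult)
    have "(\<lambda>(x, y). (\<lambda>j\<in>insert i I. \<psi> j (((x::'i\<Rightarrow>real)(i:=y)) j))) \<in> (?PI \<Otimes>\<^sub>M G) \<rightarrow>\<^sub>M ?PJ"
    proof -
      have u1: "(\<lambda>(x, y). (x::'i \<Rightarrow> real)(i := y)) \<in> (?PI \<Otimes>\<^sub>M G) \<rightarrow>\<^sub>M ?PJ"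
        by (rule ad)
      have "(\<lambda>x. \<lambda>j\<in>insert i I. \<psi> j (x j)) \<circ> (\<lambda>(x, y). (x::'i \<Rightarrow> real)(i := y)) \<in> (?PI \<Otimes>\<^sub>M G) \<rightarrow>\<^sub>M ?PJ"
        by (rule measurable_comp[OF u1 u2])
      then show ?thesis by (simp add: comp_def case_prod_beta')
    qed
    then have "(\<lambda>(x, y). f (\<lambda>j\<in>insert i I. \<psi> j (((x::'i\<Rightarrow>real)(i:=y)) j))) \<in> borel_measurable (?PI \<Otimes>\<^sub>M G)"
      using measurable_comp[OF _ fm] by (simp add: comp_def case_prod_beta')
    then show "(\<lambda>x. \<integral>\<^sup>+y. f (\<lambda>j\<in>insert i I. \<psi> j ((x(i:=y)) j)) \<partial>G) \<in> borel_measurable ?PI"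
      by (intro P.borel_measurable_nn_integral) simp
  qed
  also have "(\<integral>\<^sup>+x. (\<integral>\<^sup>+y. f (\<lambda>j\<in>insert i I. \<psi> j ((x(i:=y)) j)) \<partial>G) \<partial>?PI)
     = (\<integral>\<^sup>+x. f (\<lambda>j\<in>insert i I. \<psi> j (x j)) \<partial>?PJ)"
    by (rule P.product_nn_integral_insert[symmetric], rule insert.hyps, rule insert.hyps, rule measurable_compose[OF u2 fm])
  finally have fin: "(\<integral>\<^sup>+x. f x \<partial>?PJ) \<le> ennreal (\<Prod>j\<in>I. c j) * (ennreal (c i) * (\<integral>\<^sup>+x. f (\<lambda>j\<in>insert i I. \<psi> j (x j)) \<partial>?PJ))" .
  have "ennreal (\<Prod>j\<in>insert i I. c j) = ennreal (\<Prod>j\<in>I. c j) * ennreal (c i)"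
    using insert.hyps c by (simp add: ennreal_mult prod_nonneg mult.commute)
  then show ?case using fin by (simp only: mult.assoc)
qed



lemma H_finite:
  assumes pd: "prob_density h"
  shows "finite_measure (density lborel h)"
proof (rule finite_measureI)
  have hm: "h \<in> borel_measurable borel" using pd by (simp add: prob_density_def)
  have "emeasure (density lborel h) (space (density lborel h)) = (\<integral>\<^sup>+ z. ennreal (h z) \<partial>lborel)"
    using hm by (simp add: emeasure_density)
  also have "\<dots> = 1" using pd by (simp add: prob_density_def)
  finally show "emeasure (density lborel h) (space (density lborel h)) \<noteq> \<infinity>" by simp
qed

lemma G_emeasure:
  assumes pd: "prob_density h" and B: "B \<in> sets borel"
  shows "emeasure (density lborel (one_sided h)) B =
    ennreal (inverse (\<integral>w. indicator {0..} w * h w \<partial>lborel)) * emeasure (density lborel h) (B \<inter> {0..})"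
proof -
  define K where "K = (\<integral>w. indicator {0..} w * h w \<partial>lborel)"
  have hm[measurable]: "h \<in> borel_measurable borel" and h0: "\<And>z. 0 \<le> h z"
    using pd by (auto simp: prob_density_def)
  have K0: "0 \<le> K" unfolding K_def by (intro integral_nonneg_AE AE_I2) (simp add: h0)
  have gm: "one_sided h \<in> borel_measurable borel" unfolding one_sided_def by measurable
  have "emeasure (density lborel (one_sided h)) B = (\<integral>\<^sup>+z. ennreal (one_sided h z) * indicator B z \<partial>lborel)"
    using B gm by (subst emeasure_density) auto
  also have "\<dots> = (\<integral>\<^sup>+z. ennreal (inverse K) * (ennreal (h z) * indicator (B \<inter> {0..}) z) \<partial>lborel)"
  proof (rule nn_integral_cong)
    fix z
    show "ennreal (one_sided h z) * indicator B z = ennreal (inverse K) * (ennreal (h z) * indicator (B \<inter> {0..}) z)"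
    proof (cases "z < 0")
      case True then show ?thesis by (simp add: one_sided_def indicator_def)
    next
      case False
      then have "one_sided h z = inverse K * h z" by (simp add: one_sided_def K_def divide_inverse mult.commute)
      then have "ennreal (one_sided h z) = ennreal (inverse K) * ennreal (h z)"
        using K0 h0 by (simp add: ennreal_mult)
      then show ?thesis using False by (simp add: indicator_def mult.assoc)
    qed
  qed
  also have "\<dots> = ennreal (inverse K) * (\<integral>\<^sup>+z. ennreal (h z) * indicator (B \<inter> {0..}) z \<partial>lborel)"
  proof (rule nn_integral_cmult)
    have Bs: "B \<inter> {0..} \<in> sets lborel" using B by (intro sets.Int) auto
    show "(\<lambda>z. ennreal (h z) * indicator (B \<inter> {0..}) z) \<in> borel_measurable lborel"
      using Bs by (intro borel_measurable_times_ennreal borel_measurable_indicator) auto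
  qed
  also have "(\<integral>\<^sup>+z. ennreal (h z) * indicator (B \<inter> {0..}) z \<partial>lborel) = emeasure (density lborel h) (B \<inter> {0..})"
    using B by (subst emeasure_density) auto
  finally show ?thesis unfolding K_def .
qed

lemma H_shift:
  assumes adm: "admissible \<alpha> \<beta> h" and pd: "prob_density h" and e: "e > 0" "\<bar>\<Delta>\<bar> \<le> \<alpha> e" "0 \<le> \<beta> e"
    and A: "A \<in> sets borel"
  shows "emeasure (density lborel h) A \<le> ennreal (exp (e/2)) * emeasure (density lborel h) ((\<lambda>s. s - \<Delta>) -` A)"
proof -
  let ?H = "density lborel h"
  interpret H: finite_measure ?H by (rule H_finite[OF pd])
  have img: "(\<lambda>s. s + \<Delta>) ` A = (\<lambda>s. s - \<Delta>) -` A"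
  proof
    show "(\<lambda>s. s + \<Delta>) ` A \<subseteq> (\<lambda>s. s - \<Delta>) -` A" by auto
    show "(\<lambda>s. s - \<Delta>) -` A \<subseteq> (\<lambda>s. s + \<Delta>) ` A"
    proof
      fix s assume "s \<in> (\<lambda>s. s - \<Delta>) -` A"
      then have "s - \<Delta> \<in> A" by simp
      then show "s \<in> (\<lambda>s. s + \<Delta>) ` A" by (rule rev_image_eqI) simp
    qed
  qed
  have "\<bar>(0::real)\<bar> \<le> \<beta> e" using e by simp
  with adm e A have "measure ?H A \<le> exp (e/2) * measure ?H ((\<lambda>s. s + \<Delta>) ` A)"
    unfolding admissible_def by blast
  then have "measure ?H A \<le> exp (e/2) * measure ?H ((\<lambda>s. s - \<Delta>) -` A)" by (simp only: img)
  then show ?thesis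
    by (simp add: H.emeasure_eq_measure ennreal_mult[symmetric] ennreal_leI)
qed

lemma H_dil:
  assumes adm: "admissible \<alpha> \<beta> h" and pd: "prob_density h" and e: "e > 0" "\<bar>lam\<bar> \<le> \<beta> e" "0 \<le> \<alpha> e"
    and A: "A \<in> sets borel"
  shows "emeasure (density lborel h) A \<le> ennreal (exp (e/2)) * emeasure (density lborel h) ((\<lambda>s. exp (- lam) * s) -` A)"
proof -
  let ?H = "density lborel h"
  interpret H: finite_measure ?H by (rule H_finite[OF pd])
  have img: "(\<lambda>s. exp lam * s) ` A = (\<lambda>s. exp (- lam) * s) -` A"
  proof
    show "(\<lambda>s. exp lam * s) ` A \<subseteq> (\<lambda>s. exp (- lam) * s) -` A"
      by (auto simp: mult.assoc[symmetric] exp_add[symmetric])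
    show "(\<lambda>s. exp (- lam) * s) -` A \<subseteq> (\<lambda>s. exp lam * s) ` A"
    proof
      fix s assume "s \<in> (\<lambda>s. exp (- lam) * s) -` A"
      then have "exp (- lam) * s \<in> A" by simp
      then show "s \<in> (\<lambda>s. exp lam * s) ` A"
        by (rule rev_image_eqI) (simp add: mult.assoc[symmetric] exp_add[symmetric])
    qed
  qed
  have "\<bar>(0::real)\<bar> \<le> \<alpha> e" using e by simp
  with adm e A have "measure ?H A \<le> exp (e/2) * measure ?H ((\<lambda>s. exp lam * s) ` A)"
    unfolding admissible_def by blast
  then have "measure ?H A \<le> exp (e/2) * measure ?H ((\<lambda>s. exp (- lam) * s) -` A)" by (simp only: img)
  then show ?thesis
    by (simp add: H.emeasure_eq_measure ennreal_mult[symmetric] ennreal_leI)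
qed



lemma vimage_shift_borel: "A \<in> sets borel \<Longrightarrow> (\<lambda>s::real. s - d) -` A \<in> sets borel"
  using measurable_sets[of "\<lambda>s::real. s - d" borel borel A] by (simp add: borel_measurable_diff)

lemma vimage_scale_borel: "A \<in> sets borel \<Longrightarrow> (\<lambda>s::real. d * s) -` A \<in> sets borel"
  using measurable_sets[of "\<lambda>s::real. d * s" borel borel A] by simp

lemma G_shift2:
  assumes adm: "admissible \<alpha> \<beta> h" and pd: "prob_density h" and e: "e > 0" "0 < \<alpha> e" "0 \<le> \<beta> e"
    and B: "B \<in> sets borel"
  shows "emeasure (density lborel (one_sided h)) B \<le> ennreal (exp e) * emeasure (density lborel (one_sided h)) ((\<lambda>s. s - 2 * \<alpha> e) -` B)"
proof -
  let ?H = "density lborel h" and ?a = "\<alpha> e" and ?c = "ennreal (exp (e/2))"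
  define iK where "iK = ennreal (inverse (\<integral>w. indicator {0..} w * h w \<partial>lborel))"
  define A where "A = B \<inter> {0..}"
  define A1 where "A1 = (\<lambda>s. s - ?a) -` A"
  have As: "A \<in> sets borel" unfolding A_def using B by auto
  have A1s: "A1 \<in> sets borel" unfolding A1_def using As by (rule vimage_shift_borel)
  have ea: "\<bar>?a\<bar> \<le> \<alpha> e" using e by simp
  have 1: "emeasure ?H A \<le> ?c * emeasure ?H A1"
    unfolding A1_def by (rule H_shift[OF adm pd e(1) ea e(3) As])
  have 2: "emeasure ?H A1 \<le> ?c * emeasure ?H ((\<lambda>s. s - ?a) -` A1)"
    by (rule H_shift[OF adm pd e(1) ea e(3) A1s])
  have sub: "(\<lambda>s. s - ?a) -` A1 \<subseteq> (\<lambda>s. s - 2 * ?a) -` B \<inter> {0..}"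
    unfolding A1_def A_def using e by auto
  have Ts: "(\<lambda>s. s - 2 * ?a) -` B \<in> sets borel" using B by (rule vimage_shift_borel)
  have 3: "emeasure ?H ((\<lambda>s. s - ?a) -` A1) \<le> emeasure ?H ((\<lambda>s. s - 2 * ?a) -` B \<inter> {0..})"
    by (rule emeasure_mono[OF sub]) (use Ts in auto)
  have "emeasure ?H A \<le> ?c * (?c * emeasure ?H ((\<lambda>s. s - 2 * ?a) -` B \<inter> {0..}))"
    using 1 2 3 by (meson dual_order.trans mult_left_mono zero_le)
  also have "?c * (?c * X) = ennreal (exp e) * X" for X
    by (simp add: mult.assoc[symmetric] ennreal_mult[symmetric] exp_add[symmetric])
  finally have 4: "emeasure ?H A \<le> ennreal (exp e) * emeasure ?H ((\<lambda>s. s - 2 * ?a) -` B \<inter> {0..})" .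
  have "emeasure (density lborel (one_sided h)) B = iK * emeasure ?H A"
    unfolding iK_def A_def by (rule G_emeasure[OF pd B])
  also have "\<dots> \<le> iK * (ennreal (exp e) * emeasure ?H ((\<lambda>s. s - 2 * ?a) -` B \<inter> {0..}))"
    by (rule mult_left_mono[OF 4]) simp
  also have "\<dots> = ennreal (exp e) * (iK * emeasure ?H ((\<lambda>s. s - 2 * ?a) -` B \<inter> {0..}))"
    by (simp add: ac_simps)
  also have "iK * emeasure ?H ((\<lambda>s. s - 2 * ?a) -` B \<inter> {0..}) = emeasure (density lborel (one_sided h)) ((\<lambda>s. s - 2 * ?a) -` B)"
    unfolding iK_def by (rule G_emeasure[OF pd Ts, symmetric])
  finally show ?thesis .
qed

lemma G_dil:
  assumes adm: "admissible \<alpha> \<beta> h" and pd: "prob_density h" and e: "e > 0" "0 \<le> \<alpha> e"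
    and r: "0 < \<rho>" "\<bar>ln \<rho>\<bar> \<le> \<beta> e"
    and B: "B \<in> sets borel"
  shows "emeasure (density lborel (one_sided h)) B \<le> ennreal (exp (e/2)) * emeasure (density lborel (one_sided h)) ((\<lambda>s. \<rho> * s) -` B)"
proof -
  let ?H = "density lborel h" and ?c = "ennreal (exp (e/2))"
  define iK where "iK = ennreal (inverse (\<integral>w. indicator {0..} w * h w \<partial>lborel))"
  define A where "A = B \<inter> {0..}"
  have As: "A \<in> sets borel" unfolding A_def using B by auto
  have el: "\<bar>- ln \<rho>\<bar> \<le> \<beta> e" using r by simp
  have "emeasure ?H A \<le> ?c * emeasure ?H ((\<lambda>s. exp (- (- ln \<rho>)) * s) -` A)"
    by (rule H_dil[OF adm pd e(1) el e(2) As])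
  also have "(\<lambda>s. exp (- (- ln \<rho>)) * s) -` A = (\<lambda>s. \<rho> * s) -` B \<inter> {0..}"
    unfolding A_def using r by (auto simp: zero_le_mult_iff)
  finally have 4: "emeasure ?H A \<le> ?c * emeasure ?H ((\<lambda>s. \<rho> * s) -` B \<inter> {0..})" .
  have Ts: "(\<lambda>s. \<rho> * s) -` B \<in> sets borel" using B by (rule vimage_scale_borel)
  have "emeasure (density lborel (one_sided h)) B = iK * emeasure ?H A"
    unfolding iK_def A_def by (rule G_emeasure[OF pd B])
  also have "\<dots> \<le> iK * (?c * emeasure ?H ((\<lambda>s. \<rho> * s) -` B \<inter> {0..}))"
    by (rule mult_left_mono[OF 4]) simp
  also have "\<dots> = ?c * (iK * emeasure ?H ((\<lambda>s. \<rho> * s) -` B \<inter> {0..}))"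
    by (simp add: ac_simps)
  also have "iK * emeasure ?H ((\<lambda>s. \<rho> * s) -` B \<inter> {0..}) = emeasure (density lborel (one_sided h)) ((\<lambda>s. \<rho> * s) -` B)"
    unfolding iK_def by (rule G_emeasure[OF pd Ts, symmetric])
  finally show ?thesis .
qed



lemma hd_filter_sub:
  assumes "hd (filter P xs) = r" "r \<in> set (filter P xs)" "Q r" "\<forall>x\<in>set xs. Q x \<longrightarrow> P x"
  shows "hd (filter Q xs) = r"
  using assms
proof (induction xs)
  case Nil
  then show ?case by simp
next
  case (Cons a t)
  show ?case
  proof (cases "P a")
    case True
    then have "a = r" using Cons.prems(1) by simp
    then show ?thesis using Cons.prems(3) by simp
  next
    case False
    then have nQ: "\<not> Q a" using Cons.prems(4) by auto
    have "hd (filter Q t) = r"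
      by (rule Cons.IH) (use Cons.prems False in auto)
    then show ?thesis using nQ by simp
  qed
qed

lemma argmax_first_props:
  assumes "rs \<noteq> []"
  shows "argmax_first rs f \<in> set rs" "f (argmax_first rs f) = Max (f ` set rs)"
    "argmax_first rs f \<in> set (filter (\<lambda>r. f r = Max (f ` set rs)) rs)"
proof -
  have "Max (f ` set rs) \<in> f ` set rs" using assms by (intro Max_in) auto
  then obtain r where "r \<in> set rs" "f r = Max (f ` set rs)" by auto
  then have ne: "filter (\<lambda>r. f r = Max (f ` set rs)) rs \<noteq> []" by (auto simp: filter_empty_conv)
  show 3: "argmax_first rs f \<in> set (filter (\<lambda>r. f r = Max (f ` set rs)) rs)"
    unfolding argmax_first_def using ne by (rule hd_in_set)
  then show "argmax_first rs f \<in> set rs" "f (argmax_first rs f) = Max (f ` set rs)" by auto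
qed

lemma argmax_transfer:
  assumes ne: "rs \<noteq> []" and r: "argmax_first rs f = r"
   and le: "\<And>q. q \<in> set rs \<Longrightarrow> f q \<le> f r \<Longrightarrow> f' q \<le> f' r"
   and lt: "\<And>q. q \<in> set rs \<Longrightarrow> f q < f r \<Longrightarrow> f' q < f' r"
  shows "argmax_first rs f' = r"
proof -
  have rin: "r \<in> set rs" and fr: "f r = Max (f ` set rs)"
    and rf: "r \<in> set (filter (\<lambda>r. f r = Max (f ` set rs)) rs)"
    using argmax_first_props[OF ne, of f] r by auto
  have fle: "f q \<le> f r" if "q \<in> set rs" for q
    using fr Max_ge[of "f ` set rs" "f q"] that by simp
  have f'le: "f' q \<le> f' r" if "q \<in> set rs" for q using le[OF that fle[OF that]] .
  have f'r: "f' r = Max (f' ` set rs)"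
    by (rule Max_eqI[symmetric]) (use rin f'le in auto)
  show ?thesis unfolding argmax_first_def
  proof (rule hd_filter_sub[where P="\<lambda>r. f r = Max (f ` set rs)"])
    show "hd (filter (\<lambda>r. f r = Max (f ` set rs)) rs) = r" using r by (simp add: argmax_first_def)
    show "r \<in> set (filter (\<lambda>r. f r = Max (f ` set rs)) rs)" by (rule rf)
    show "f' r = Max (f' ` set rs)" by (rule f'r)
    show "\<forall>x\<in>set rs. f' x = Max (f' ` set rs) \<longrightarrow> f x = Max (f ` set rs)"
    proof (intro ballI impI)
      fix q assume q: "q \<in> set rs" "f' q = Max (f' ` set rs)"
      then have "\<not> f' q < f' r" using f'r by simp
      then have "\<not> f q < f r" using lt[OF q(1)] by blast
      then show "f q = Max (f ` set rs)" using fle[OF q(1)] fr by simp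
    qed
  qed
qed

lemma hd_filter_meas:
  assumes "\<And>r. r \<in> set xs \<Longrightarrow> {z \<in> space M. P r z} \<in> sets M"
  shows "{z \<in> space M. hd (filter (\<lambda>r. P r z) xs) \<in> A} \<in> sets M"
  using assms
proof (induction xs)
  case Nil
  then show ?case by (cases "hd [] \<in> A") auto
next
  case (Cons a t)
  have eq: "{z \<in> space M. hd (filter (\<lambda>r. P r z) (a # t)) \<in> A} =
     {z \<in> space M. (P a z \<and> a \<in> A) \<or> (\<not> P a z \<and> hd (filter (\<lambda>r. P r z) t) \<in> A)}" by auto
  have pa: "{z \<in> space M. P a z} \<in> sets M" using Cons.prems by simp
  have ih: "{z \<in> space M. hd (filter (\<lambda>r. P r z) t) \<in> A} \<in> sets M" using Cons by simp
  show ?case unfolding eq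
    by (intro sets.sets_Collect_disj sets.sets_Collect_conj sets.sets_Collect_neg sets.sets_Collect_const pa ih)
qed

lemma argmax_meas:
  fixes F :: "'a \<Rightarrow> 'r \<Rightarrow> real"
  assumes Fm: "\<And>r. r \<in> set rs \<Longrightarrow> (\<lambda>z. F z r) \<in> borel_measurable M"
  shows "(\<lambda>z. argmax_first rs (F z)) \<in> M \<rightarrow>\<^sub>M count_space UNIV"
proof (rule measurableI)
  fix A :: "'r set"
  have "(\<lambda>z. argmax_first rs (F z)) -` A \<inter> space M =
     {z \<in> space M. hd (filter (\<lambda>r. F z r = Max ((\<lambda>i. F z i) ` set rs)) rs) \<in> A}"
    by (auto simp: argmax_first_def)
  also have "\<dots> \<in> sets M"
  proof (rule hd_filter_meas)
    fix r assume "r \<in> set rs"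
    then show "{z \<in> space M. F z r = Max ((\<lambda>i. F z i) ` set rs)} \<in> sets M"
      using Fm by (intro borel_measurable_eq borel_measurable_Max) auto
  qed
  finally show "(\<lambda>z. argmax_first rs (F z)) -` A \<inter> space M \<in> sets M" .
qed simp

lemma step:
  fixes G :: "real measure" and R :: "'r set" and c :: "'r \<Rightarrow> real"
  assumes sG: "sets G = sets borel" and fin: "finite_measure G"
   and psi: "\<And>i. \<psi> i \<in> borel_measurable borel"
   and c: "\<And>i. 0 \<le> c i" and fR: "finite R"
   and le1: "\<And>i B. i\<in>R \<Longrightarrow> B \<in> sets borel \<Longrightarrow> emeasure G B \<le> ennreal (c i) * emeasure G (\<psi> i -` B)"
   and neg0: "emeasure G {..<0} = 0"
   and chxm: "chx \<in> PiM R (\<lambda>_. G) \<rightarrow>\<^sub>M count_space UNIV"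
   and chym: "chy \<in> PiM R (\<lambda>_. G) \<rightarrow>\<^sub>M count_space UNIV"
   and incl: "\<And>z. z \<in> space (PiM R (\<lambda>_. G)) \<Longrightarrow> (\<forall>j\<in>R. 0 \<le> \<psi> j (z j)) \<Longrightarrow>
                chx (\<lambda>j\<in>R. \<psi> j (z j)) = r \<Longrightarrow> chy z = r"
  shows "emeasure (PiM R (\<lambda>_. G)) (chx -` {r} \<inter> space (PiM R (\<lambda>_. G)))
     \<le> ennreal (\<Prod>i\<in>R. c i) * emeasure (PiM R (\<lambda>_. G)) (chy -` {r} \<inter> space (PiM R (\<lambda>_. G)))"
proof -
  let ?P = "PiM R (\<lambda>_. G)"
  define Ax where "Ax = chx -` {r} \<inter> space ?P"
  define Ay where "Ay = chy -` {r} \<inter> space ?P"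
  define supp where "supp = {z \<in> space ?P. \<forall>j\<in>R. 0 \<le> z j}"
  interpret P: product_sigma_finite "\<lambda>_. G"
    by (rule product_sigma_finite.intro) (rule finite_measure.axioms(1)[OF fin])
  have spG: "space G = UNIV" using sets_eq_imp_space_eq[OF sG] by simp
  have Axs: "Ax \<in> sets ?P" unfolding Ax_def by (rule measurable_sets[OF chxm]) simp
  have Ays: "Ay \<in> sets ?P" unfolding Ay_def by (rule measurable_sets[OF chym]) simp
  have compm: "(\<lambda>z. z j) \<in> borel_measurable ?P" if "j \<in> R" for j
  proof -
    have "(\<lambda>z. z j) \<in> ?P \<rightarrow>\<^sub>M G" by (rule measurable_component_singleton[OF that])
    then show ?thesis using measurable_cong_sets[OF refl sG] by blast
  qed
  have supps: "supp \<in> sets ?P" unfolding supp_def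
  proof (rule sets.sets_Collect_finite_All[OF _ fR])
    fix j assume "j \<in> R"
    then show "{z \<in> space ?P. 0 \<le> z j} \<in> sets ?P"
      using borel_measurable_le[OF borel_measurable_const compm] by blast
  qed
  have AE: "AE z in ?P. \<forall>j\<in>R. 0 \<le> z j"
  proof (rule AE_finite_allI[OF fR])
    fix j assume j: "j \<in> R"
    define N :: "('r \<Rightarrow> real) set" where "N = Pi\<^sub>E R (\<lambda>i. if i = j then {..<0} else UNIV)"
    have "emeasure ?P N = (\<Prod>i\<in>R. emeasure G (if i = j then {..<0} else UNIV))"
      unfolding N_def by (rule P.emeasure_PiM[OF fR]) (auto simp: sG)
    also have "\<dots> = 0" using j fR neg0 by (intro prod_zero) auto
    finally have N0: "emeasure ?P N = 0" .
    have Ns: "N \<in> sets ?P" unfolding N_def by (rule sets_PiM_I_finite[OF fR]) (auto simp: sG)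
    show "AE z in ?P. 0 \<le> z j"
    proof (rule AE_I'[of N])
      show "N \<in> null_sets ?P" using N0 Ns by auto
      show "{z \<in> space ?P. \<not> 0 \<le> z j} \<subseteq> N"
        unfolding N_def by (auto simp: space_PiM spG PiE_iff extensional_def)
    qed
  qed
  have "emeasure ?P Ax = (\<integral>\<^sup>+z. indicator Ax z \<partial>?P)" using Axs by simp
  also have "\<dots> = (\<integral>\<^sup>+z. indicator (Ax \<inter> supp) z \<partial>?P)"
  proof (rule nn_integral_cong_AE)
    show "AE z in ?P. indicator Ax z = (indicator (Ax \<inter> supp) z :: ennreal)"
      using AE by eventually_elim (auto simp: supp_def Ax_def indicator_def)
  qed
  also have "\<dots> \<le> ennreal (\<Prod>i\<in>R. c i) * (\<integral>\<^sup>+z. indicator (Ax \<inter> supp) (\<lambda>j\<in>R. \<psi> j (z j)) \<partial>?P)"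
    by (rule prod_le[OF sG fin psi c fR le1]) (use Axs supps in auto)
  also have "\<dots> \<le> ennreal (\<Prod>i\<in>R. c i) * (\<integral>\<^sup>+z. indicator Ay z \<partial>?P)"
  proof (rule mult_left_mono[OF nn_integral_mono])
    fix z assume z: "z \<in> space ?P"
    show "indicator (Ax \<inter> supp) (\<lambda>j\<in>R. \<psi> j (z j)) \<le> (indicator Ay z :: ennreal)"
    proof (cases "(\<lambda>j\<in>R. \<psi> j (z j)) \<in> Ax \<inter> supp")
      case True
      then have "chx (\<lambda>j\<in>R. \<psi> j (z j)) = r" "\<forall>j\<in>R. 0 \<le> \<psi> j (z j)"
        by (auto simp: Ax_def supp_def)
      then have "chy z = r" using incl z by blast
      then show ?thesis using z by (simp add: Ay_def indicator_def)
    qed simp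
  qed simp
  also have "(\<integral>\<^sup>+z. indicator Ay z \<partial>?P) = emeasure ?P Ay" using Ays by simp
  finally show ?thesis unfolding Ax_def Ay_def .
qed



lemma transfer_diff:
  assumes ne: "rs \<noteq> []" and r: "argmax_first rs f = r"
    and d: "\<And>q. q \<in> set rs \<Longrightarrow> f r - f q \<le> f' r - f' q"
  shows "argmax_first rs f' = r"
proof (rule argmax_transfer[OF ne r])
  fix q assume q: "q \<in> set rs" and "f q \<le> f r"
  then show "f' q \<le> f' r" using d[OF q] by linarith
next
  fix q assume q: "q \<in> set rs" and "f q < f r"
  then show "f' q < f' r" using d[OF q] by linarith
qed

lemma neighboring_sym: "neighboring n x y \<Longrightarrow> neighboring n y x"
proof -
  assume nb: "neighboring n x y"
  then have len: "length x = n" "length y = n" by (auto simp: neighboring_def)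
  have "{i. i < length y \<and> y ! i \<noteq> x ! i} = {i. i < length x \<and> x ! i \<noteq> y ! i}" using len by auto
  then have "hamming y x = hamming x y" unfolding hamming_def by simp
  then show ?thesis using nb unfolding neighboring_def by simp
qed

lemma conv_ineq:
  assumes fin: "finite_measure P" and le: "emeasure P X \<le> ennreal C * emeasure P Y"
    and C: "0 \<le> C" "C \<le> D"
  shows "measure P X \<le> D * measure P Y"
proof -
  interpret finite_measure P by (rule fin)
  have "ennreal (measure P X) \<le> ennreal (C * measure P Y)"
    using le C by (simp add: emeasure_eq_measure ennreal_mult)
  then have "measure P X \<le> C * measure P Y"
    using C by (subst (asm) ennreal_le_iff) (auto)
  also have "\<dots> \<le> D * measure P Y" using C by (intro mult_right_mono) auto
  finally show ?thesis .
qed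

theorem theorem3:
  fixes h :: "real \<Rightarrow> real" and \<alpha> \<beta> :: "real \<Rightarrow> real"
    and n :: nat and rs :: "'r list"
    and u S :: "'d list \<Rightarrow> 'r \<Rightarrow> real"
    and \<epsilon> k l :: real
  assumes "prob_density h"
    and "\<forall>e>0. \<alpha> e > 0" and "\<forall>e>0. \<beta> e > 0"
    and "admissible \<alpha> \<beta> h"
    and "\<forall>z z'. 0 \<le> z \<and> z < z' \<longrightarrow> h z > h z' \<and> h z' > 0"
    and "\<epsilon> > 0" and "k > 0" and "l > 0"
    and "rs \<noteq> []" and "distinct rs"
    and "\<forall>x r. length x = n \<and> r \<in> set rs \<longrightarrow> S x r > 0"
    and "smooth_upper_bound n (set rs) u S (\<beta> (l * \<epsilon>))"
  shows "differentially_private n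
           (sps_mechanism rs (one_sided h) u S (\<alpha> (k * \<epsilon>)))
           ((k + (real (length rs) - 1) / 2 * l) * \<epsilon>)"
proof -
  note pd = assms(1) and adm = assms(4) and eps = assms(6) and kpos = assms(7) and lpos = assms(8)
    and ne = assms(9) and dist = assms(10) and Spos = assms(11) and smooth = assms(12)
  let ?a = "\<alpha> (k * \<epsilon>)" and ?b = "\<beta> (l * \<epsilon>)"
  define G where "G = density lborel (one_sided h)"
  define P where "P = PiM (set rs) (\<lambda>_. G)"
  define E where "E = (k + (real (length rs) - 1) / 2 * l) * \<epsilon>"
  define m where "m = length rs"
  have m1: "1 \<le> m" using ne unfolding m_def by (cases rs) auto
  have kE: "0 < k * \<epsilon>" using kpos eps by simp
  have lE: "0 < l * \<epsilon>" using lpos eps by simp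
  have a0: "0 < ?a" using assms(2) kE by blast
  have al0: "0 \<le> \<alpha> (l * \<epsilon>)" using assms(2) lE by (meson less_imp_le)
  have bk0: "0 \<le> \<beta> (k * \<epsilon>)" using assms(3) kE by (meson less_imp_le)
  have E0: "0 \<le> E" unfolding E_def using m1 kpos lpos eps unfolding m_def
    by (intro mult_nonneg_nonneg add_nonneg_nonneg) auto
  have sG: "sets G = sets borel" unfolding G_def by simp
  have spG: "space G = UNIV" unfolding G_def by simp
  have neg0: "emeasure G {..<0} = 0"
  proof -
    have "{..<0::real} \<inter> {0..} = {}" by auto
    then show ?thesis unfolding G_def by (simp add: G_emeasure[OF pd])
  qed
  have finG: "finite_measure G"
  proof (rule finite_measureI)
    interpret H: finite_measure "density lborel h" by (rule H_finite[OF pd])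
    have "emeasure G (space G) = ennreal (inverse (\<integral>w. indicator {0..} w * h w \<partial>lborel)) * emeasure (density lborel h) (UNIV \<inter> {0..})"
      unfolding G_def by (simp add: G_emeasure[OF pd])
    then show "emeasure G (space G) \<noteq> \<infinity>"
      using H.emeasure_finite by (simp add: ennreal_mult_eq_top_iff)
  qed
  interpret PS: product_sigma_finite "\<lambda>_. G"
    by (rule product_sigma_finite.intro) (rule finite_measure.axioms(1)[OF finG])
  have finR: "finite (set rs)" by simp
  have finP: "finite_measure P"
  proof (rule finite_measureI)
    have sp: "space P = Pi\<^sub>E (set rs) (\<lambda>_. space G)" unfolding P_def by (simp add: space_PiM)
    have "emeasure P (Pi\<^sub>E (set rs) (\<lambda>_. space G)) = (\<Prod>i\<in>set rs. emeasure G (space G))"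
      unfolding P_def by (rule PS.emeasure_PiM[OF finR]) simp
    then have "emeasure P (space P) = (\<Prod>i\<in>set rs. emeasure G (space G))" by (simp only: sp)
    moreover have "emeasure G (space G) \<noteq> top" using finite_measure.emeasure_finite[OF finG] by simp
    ultimately show "emeasure P (space P) \<noteq> \<infinity>" by (simp add: power_eq_top_ennreal)
  qed
  interpret FP: finite_measure P by (rule finP)
  have compm: "(\<lambda>z. z j) \<in> borel_measurable P" if "j \<in> set rs" for j
  proof -
    have "(\<lambda>z. z j) \<in> P \<rightarrow>\<^sub>M G" unfolding P_def by (rule measurable_component_singleton[OF that])
    then show ?thesis using measurable_cong_sets[OF refl sG] by blast
  qed
  define ch where "ch w = sps_choice rs u S ?a w" for w
  have chm: "ch w \<in> P \<rightarrow>\<^sub>M count_space UNIV" for w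
    unfolding ch_def sps_choice_def
  proof (rule argmax_meas)
    fix r assume "r \<in> set rs"
    then show "(\<lambda>z. u w r + Max (S w ` set rs) / ?a * z r) \<in> borel_measurable P"
      using compm by (intro borel_measurable_add borel_measurable_times borel_measurable_const) auto
  qed
  have chR: "ch w z \<in> set rs" for w z
    unfolding ch_def sps_choice_def by (rule argmax_first_props(1)[OF ne])
  have Mdef: "sps_mechanism rs (one_sided h) u S ?a w = distr P (count_space UNIV) (ch w)" for w
    by (simp add: sps_mechanism_def P_def G_def ch_def)
  have key: "measure P (ch x -` {r} \<inter> space P) \<le> exp E * measure P (ch y -` {r} \<inter> space P)"
    if nb: "neighboring n x y" and r: "r \<in> set rs" for x y r
  proof -
    have nb': "neighboring n y x" by (rule neighboring_sym[OF nb])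
    have lenx: "length x = n" and leny: "length y = n" using nb by (auto simp: neighboring_def)
    define Sx where "Sx = Max (S x ` set rs)"
    define Sy where "Sy = Max (S y ` set rs)"
    have Sxp: "0 < S x j" if "j \<in> set rs" for j using Spos lenx that by blast
    have Syp: "0 < S y j" if "j \<in> set rs" for j using Spos leny that by blast
    have Sxj: "S x j \<le> Sx" if "j \<in> set rs" for j unfolding Sx_def using that by (intro Max_ge) auto
    have Syj: "S y j \<le> Sy" if "j \<in> set rs" for j unfolding Sy_def using that by (intro Max_ge) auto
    have hd: "hd rs \<in> set rs" using ne by simp
    have Sx0: "0 < Sx" using Sxp[OF hd] Sxj[OF hd] by linarith
    have Sy0: "0 < Sy" using Syp[OF hd] Syj[OF hd] by linarith
    have sm: "\<bar>u x' j - u y' j\<bar> \<le> S x' j" "S x' j \<le> exp ?b * S y' j"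
      if "j \<in> set rs" "neighboring n x' y'" for j x' y'
      using smooth that unfolding smooth_upper_bound_def by blast+
    have ux: "\<bar>u x j - u y j\<bar> \<le> Sx" if "j \<in> set rs" for j
      using sm(1)[OF that nb] Sxj[OF that] by linarith
    have uy: "\<bar>u x j - u y j\<bar> \<le> Sy" if "j \<in> set rs" for j
      using sm(1)[OF that nb'] Syj[OF that] by linarith
    have SxSy: "Sx \<le> exp ?b * Sy" unfolding Sx_def
    proof (rule Max.boundedI)
      fix v assume "v \<in> S x ` set rs"
      then obtain j where j: "j \<in> set rs" "v = S x j" by auto
      have "S x j \<le> exp ?b * S y j" by (rule sm(2)[OF j(1) nb])
      also have "\<dots> \<le> exp ?b * Sy" using Syj[OF j(1)] by simp
      finally show "v \<le> exp ?b * Sy" using j by simp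
    qed (use ne in auto)
    have SySx: "Sy \<le> exp ?b * Sx" unfolding Sy_def
    proof (rule Max.boundedI)
      fix v assume "v \<in> S y ` set rs"
      then obtain j where j: "j \<in> set rs" "v = S y j" by auto
      have "S y j \<le> exp ?b * S x j" by (rule sm(2)[OF j(1) nb'])
      also have "\<dots> \<le> exp ?b * Sx" using Sxj[OF j(1)] by simp
      finally show "v \<le> exp ?b * Sx" using j by simp
    qed (use ne in auto)
    define \<rho> where "\<rho> = Sy / Sx"
    have \<rho>0: "0 < \<rho>" unfolding \<rho>_def using Sx0 Sy0 by simp
    have ln\<rho>: "\<bar>ln \<rho>\<bar> \<le> ?b"
    proof -
      have "ln Sy \<le> ln (exp ?b * Sx)" using SySx Sy0 by (subst ln_le_cancel_iff) auto
      then have 1: "ln Sy \<le> ?b + ln Sx" using Sx0 by (simp add: ln_mult)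
      have "ln Sx \<le> ln (exp ?b * Sy)" using SxSy Sx0 by (subst ln_le_cancel_iff) auto
      then have 2: "ln Sx \<le> ?b + ln Sy" using Sy0 by (simp add: ln_mult)
      have "ln \<rho> = ln Sy - ln Sx" unfolding \<rho>_def using Sx0 Sy0 by (simp add: ln_div)
      then show ?thesis using 1 2 by linarith
    qed
    have chdef: "ch w z = argmax_first rs (\<lambda>q. u w q + Max (S w ` set rs) / ?a * z q)" for w z
      unfolding ch_def sps_choice_def ..
    have Axs: "ch w -` {r} \<inter> space P \<in> sets P" for w using measurable_sets[OF chm] by simp
    show ?thesis
    proof (cases "m = 1")
      case True
      then obtain r0 where rs: "rs = [r0]" unfolding m_def by (cases rs) auto
      have "ch x z = ch y z" for z unfolding chdef rs by (simp add: argmax_first_def)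
      then have "ch x -` {r} \<inter> space P = ch y -` {r} \<inter> space P" by auto
      moreover have "measure P (ch y -` {r} \<inter> space P) \<le> exp E * measure P (ch y -` {r} \<inter> space P)"
      proof -
        have "1 \<le> exp E" using E0 by simp
        from mult_right_mono[OF this measure_nonneg] show ?thesis by simp
      qed
      ultimately show ?thesis by simp
    next
      case False
      with m1 have m2: "2 \<le> m" by simp
      show ?thesis
      proof (cases "Sx \<le> Sy")
        case True
        define \<psi> where "\<psi> i s = (if i = r then s - 2 * ?a else \<rho> * s)" for i s
        define c where "c i = (if i = r then exp (k * \<epsilon>) else exp (l * \<epsilon> / 2))" for i
        have psim: "\<psi> i \<in> borel_measurable borel" for i unfolding \<psi>_def by measurable
        have c0: "0 \<le> c i" for i unfolding c_def by simp
        have le1: "emeasure G B \<le> ennreal (c i) * emeasure G (\<psi> i -` B)"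
          if "i \<in> set rs" "B \<in> sets borel" for i B
        proof (cases "i = r")
          case True
          then show ?thesis unfolding G_def c_def \<psi>_def
            using G_shift2[OF adm pd kE a0 bk0 that(2)] by simp
        next
          case False
          then show ?thesis unfolding G_def c_def \<psi>_def
            using G_dil[OF adm pd lE al0 \<rho>0 ln\<rho> that(2)] by simp
        qed
        have incl: "ch y z = r" if z: "z \<in> space P" and nn: "\<forall>j\<in>set rs. 0 \<le> \<psi> j (z j)"
          and cx: "ch x (\<lambda>j\<in>set rs. \<psi> j (z j)) = r" for z
        proof -
          have "argmax_first rs (\<lambda>q. u y q + Sy / ?a * z q) = r"
          proof (rule transfer_diff[OF ne cx[unfolded chdef Sx_def[symmetric]]])
            fix q assume q: "q \<in> set rs"
            show "u x r + Sx / ?a * (\<lambda>j\<in>set rs. \<psi> j (z j)) r - (u x q + Sx / ?a * (\<lambda>j\<in>set rs. \<psi> j (z j)) q)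
                  \<le> u y r + Sy / ?a * z r - (u y q + Sy / ?a * z q)"
            proof (cases "q = r")
              case True then show ?thesis by simp
            next
              case False
              have zr: "0 \<le> z r - 2 * ?a" using nn r unfolding \<psi>_def by auto
              have e1: "Sx / ?a * (z r - 2 * ?a) = Sx / ?a * z r - 2 * Sx" using a0 by (simp add: field_simps)
              have e2: "Sx / ?a * (\<rho> * z q) = Sy / ?a * z q" unfolding \<rho>_def using Sx0 by (simp add: field_simps)
              have e3: "Sx / ?a * z r \<le> Sy / ?a * z r"
                using True zr a0 by (intro mult_right_mono divide_right_mono) auto
              have "(\<lambda>j\<in>set rs. \<psi> j (z j)) r = z r - 2 * ?a" using r unfolding \<psi>_def by simp
              moreover have "(\<lambda>j\<in>set rs. \<psi> j (z j)) q = \<rho> * z q" using q False unfolding \<psi>_def by simp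
              ultimately show ?thesis using e1 e2 e3 ux[OF r] ux[OF q] by (simp only:; linarith)
            qed
          qed
          then show ?thesis unfolding chdef Sy_def .
        qed
        have st: "emeasure P (ch x -` {r} \<inter> space P) \<le> ennreal (\<Prod>i\<in>set rs. c i) * emeasure P (ch y -` {r} \<inter> space P)"
          unfolding P_def
          by (rule step[OF sG finG psim c0 finR le1 neg0 chm[unfolded P_def] chm[unfolded P_def] incl[unfolded P_def]])
        have "(\<Prod>i\<in>set rs. c i) = c r * (\<Prod>i\<in>set rs - {r}. c i)" by (rule prod.remove[OF finR r])
        also have "(\<Prod>i\<in>set rs - {r}. c i) = (\<Prod>i\<in>set rs - {r}. exp (l * \<epsilon> / 2))"
          by (rule prod.cong) (auto simp: c_def)
        also have "\<dots> = exp (l * \<epsilon> / 2) ^ (m - 1)"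
          using dist r by (simp add: m_def distinct_card card_Diff_singleton)
        also have "\<dots> = exp (real (m - 1) * (l * \<epsilon> / 2))" by (rule exp_of_nat_mult[symmetric])
        also have "c r * \<dots> = exp E"
        proof -
          have "real (m - 1) = real m - 1" using m1 by (simp add: of_nat_diff)
          then have "k * \<epsilon> + real (m - 1) * (l * \<epsilon> / 2) = E" unfolding E_def m_def by (simp add: field_simps)
          then show ?thesis by (simp add: c_def exp_add[symmetric])
        qed
        finally have pe: "(\<Prod>i\<in>set rs. c i) = exp E" .
        show ?thesis by (rule conv_ineq[OF finP st]) (auto simp: pe prod_nonneg c0)
      next
        case False
        then have SyltSx: "Sy < Sx" by simp
        define \<psi> where "\<psi> i s = (if i = r then \<rho> * (s - 2 * ?a) else s)" for i s
        define c where "c i = (if i = r then exp (k * \<epsilon> + l * \<epsilon> / 2) else 1)" for i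
        have psim: "\<psi> i \<in> borel_measurable borel" for i unfolding \<psi>_def by measurable
        have c0: "0 \<le> c i" for i unfolding c_def by simp
        have le1: "emeasure G B \<le> ennreal (c i) * emeasure G (\<psi> i -` B)"
          if "i \<in> set rs" "B \<in> sets borel" for i B
        proof (cases "i = r")
          case True
          have Bs: "(\<lambda>s. \<rho> * s) -` B \<in> sets borel" by (rule vimage_scale_borel[OF that(2)])
          have "emeasure G B \<le> ennreal (exp (l * \<epsilon> / 2)) * emeasure G ((\<lambda>s. \<rho> * s) -` B)"
            unfolding G_def using G_dil[OF adm pd lE al0 \<rho>0 ln\<rho> that(2)] by simp
          also have "\<dots> \<le> ennreal (exp (l * \<epsilon> / 2)) * (ennreal (exp (k * \<epsilon>)) * emeasure G ((\<lambda>s. s - 2 * ?a) -` ((\<lambda>s. \<rho> * s) -` B)))"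
            unfolding G_def using G_shift2[OF adm pd kE a0 bk0 Bs] by (intro mult_left_mono) auto
          also have "\<dots> = ennreal (c i) * emeasure G (\<psi> i -` B)"
            using True unfolding c_def \<psi>_def
            by (simp add: mult.assoc[symmetric] ennreal_mult[symmetric] exp_add[symmetric] vimage_def add.commute)
          finally show ?thesis .
        next
          case False
          then show ?thesis unfolding c_def \<psi>_def by simp
        qed
        have incl: "ch y z = r" if z: "z \<in> space P" and nn: "\<forall>j\<in>set rs. 0 \<le> \<psi> j (z j)"
          and cx: "ch x (\<lambda>j\<in>set rs. \<psi> j (z j)) = r" for z
        proof -
          have "argmax_first rs (\<lambda>q. u y q + Sy / ?a * z q) = r"
          proof (rule transfer_diff[OF ne cx[unfolded chdef Sx_def[symmetric]]])
            fix q assume q: "q \<in> set rs"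
            show "u x r + Sx / ?a * (\<lambda>j\<in>set rs. \<psi> j (z j)) r - (u x q + Sx / ?a * (\<lambda>j\<in>set rs. \<psi> j (z j)) q)
                  \<le> u y r + Sy / ?a * z r - (u y q + Sy / ?a * z q)"
            proof (cases "q = r")
              case True then show ?thesis by simp
            next
              case False
              have zq: "0 \<le> z q" using nn q False unfolding \<psi>_def by auto
              have e1: "Sx / ?a * (\<rho> * (z r - 2 * ?a)) = Sy / ?a * z r - 2 * Sy"
                unfolding \<rho>_def using a0 Sx0 by (simp add: field_simps)
              have e3: "Sy / ?a * z q \<le> Sx / ?a * z q"
                using SyltSx zq a0 by (intro mult_right_mono divide_right_mono) auto
              have "(\<lambda>j\<in>set rs. \<psi> j (z j)) r = \<rho> * (z r - 2 * ?a)" using r unfolding \<psi>_def by simp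
              moreover have "(\<lambda>j\<in>set rs. \<psi> j (z j)) q = z q" using q False unfolding \<psi>_def by simp
              ultimately show ?thesis using e1 e3 uy[OF r] uy[OF q] by (simp only:; linarith)
            qed
          qed
          then show ?thesis unfolding chdef Sy_def .
        qed
        have st: "emeasure P (ch x -` {r} \<inter> space P) \<le> ennreal (\<Prod>i\<in>set rs. c i) * emeasure P (ch y -` {r} \<inter> space P)"
          unfolding P_def
          by (rule step[OF sG finG psim c0 finR le1 neg0 chm[unfolded P_def] chm[unfolded P_def] incl[unfolded P_def]])
        have "(\<Prod>i\<in>set rs. c i) = c r * (\<Prod>i\<in>set rs - {r}. c i)" by (rule prod.remove[OF finR r])
        also have "(\<Prod>i\<in>set rs - {r}. c i) = 1"
          by (rule prod.neutral) (auto simp: c_def)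
        finally have pe: "(\<Prod>i\<in>set rs. c i) = exp (k * \<epsilon> + l * \<epsilon> / 2)" by (simp add: c_def)
        have "k * \<epsilon> + l * \<epsilon> / 2 \<le> E"
        proof -
          have "1 \<le> real m - 1" using m2 by simp
          then have "1 * (l * \<epsilon>) \<le> (real m - 1) * (l * \<epsilon>)" using lE by (intro mult_right_mono) auto
          then show ?thesis unfolding E_def m_def by (simp add: field_simps)
        qed
        then have "exp (k * \<epsilon> + l * \<epsilon> / 2) \<le> exp E" by simp
        then show ?thesis by (intro conv_ineq[OF finP st]) (auto simp: pe)
      qed
    qed
  qed
  show ?thesis unfolding differentially_private_def E_def[symmetric]
  proof (intro allI impI ballI)
    fix x y T assume nb: "neighboring n x y" and T: "T \<in> sets (sps_mechanism rs (one_sided h) u S ?a x)"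
    have meas: "measure (sps_mechanism rs (one_sided h) u S ?a w) T = (\<Sum>r\<in>T \<inter> set rs. measure P (ch w -` {r} \<inter> space P))" for w
    proof -
      have "measure (sps_mechanism rs (one_sided h) u S ?a w) T = measure P (ch w -` T \<inter> space P)"
        unfolding Mdef by (rule measure_distr[OF chm]) simp
      also have "ch w -` T \<inter> space P = (\<Union>r\<in>T \<inter> set rs. ch w -` {r} \<inter> space P)"
        using chR by auto
      also have "measure P \<dots> = (\<Sum>r\<in>T \<inter> set rs. measure P (ch w -` {r} \<inter> space P))"
      proof (rule FP.finite_measure_finite_Union)
        show "finite (T \<inter> set rs)" by simp
        show "(\<lambda>r. ch w -` {r} \<inter> space P) ` (T \<inter> set rs) \<subseteq> sets P"
          using measurable_sets[OF chm] by auto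
        show "disjoint_family_on (\<lambda>r. ch w -` {r} \<inter> space P) (T \<inter> set rs)"
          by (auto simp: disjoint_family_on_def)
      qed
      finally show ?thesis .
    qed
    have "(\<Sum>r\<in>T \<inter> set rs. measure P (ch x -` {r} \<inter> space P)) \<le> (\<Sum>r\<in>T \<inter> set rs. exp E * measure P (ch y -` {r} \<inter> space P))"
      by (rule sum_mono) (rule key[OF nb], simp)
    also have "\<dots> = exp E * (\<Sum>r\<in>T \<inter> set rs. measure P (ch y -` {r} \<inter> space P))"
      by (simp add: sum_distrib_left)
    finally show "measure (sps_mechanism rs (one_sided h) u S ?a x) T \<le> exp E * measure (sps_mechanism rs (one_sided h) u S ?a y) T"
      by (simp only: meas)
  qed
qed

end
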